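(* Consider the Long-Short-Range Message-Passing (LSR-MP) architecture described in the context. Suppose that (i) the short-range module is rotation-invariant in its scalar output, i.e. $\textsc{Short}_h(Z, R\vec p) = \textsc{Short}_h(Z,\vec p)$ for all $R\in SO(3)$, and its vectorial output transforms by rotation, $\textsc{Short}_v(Z,R\vec p) = R\,\textsc{Short}_v(Z,\vec p)$; and (ii) the long-range bipartite module is rotation-invariant in its scalar output, i.e. for all $R\in SO(3)$ and all inputs, $$\textsc{Long}_x(h,H,x^0,R\vec\mu^0,R\vec p,R\vec V,R\vec P)=\textsc{Long}_x(h,H,x^0,\vec\mu^0,\vec p,\vec V,\vec P).$$ Then the scalar output $h_{\text{out}}$ of the LSR-MP architecture is rotation-invariant: replacing every atomic position $\vec p_i$ by $R\vec p_i$ (for any $R\in SO(3)$) leaves $h_{\text{out}}$ unchanged.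
   Context: A molecule has $n$ atoms with atomic numbers $Z=(z_1,\dots,z_n)$ and positions $\vec p_1,\dots,\vec p_n\in\mathbb{R}^3$; a rotation $R\in SO(3)$ acts by $\vec p_i\mapsto R\vec p_i$ and on a vectorial embedding $\vec w\in\mathbb{R}^{3\times d}$ by $\vec w\mapsto R\vec w$. Scalar embeddings lie in $\mathbb{R}^d$. LSR-MP consists of: (1) a short-range module, a map $(Z,\vec p)\mapsto (h,\vec v)=(\textsc{Short}_h(Z,\vec p),\textsc{Short}_v(Z,\vec p))$ producing for each atom $i$ a scalar embedding $h_i\in\mathbb{R}^d$ and a vectorial embedding $\vec v_i\in\mathbb{R}^{3\times d}$. (2) A fragmentation module: a fixed assignment of the atoms into fragments $S(1),\dots,S(m)\subseteq\{1,\dots,n\}$, and fragment embeddings $H_j=\sum_{i\in S(j)}\alpha_i\odot h_i$, $\vec V_j=\sum_{i\in S(j)}\beta_i\odot\vec v_i$, $\vec P_j=\sum_{i\in S(j)}\gamma_i\vec p_i$, where $\alpha_i,\beta_i\in\mathbb{R}^d$ (acting channelwise, $\odot$ the Hadamard product) and $\gamma_i\in\mathbb{R}$ are fixed weights not affected by the rotation. (3) A long-range bipartite module: initial long-range embeddings $x^0_i=\textsc{Dense}(h_i)$, $\vec\mu^0_i=U(\vec v_i)$, and a map producing long-range scalar embeddings $x=\textsc{Long}_x(h,H,x^0,\vec\mu^0,\vec p,\vec V,\vec P)$ and vectorial embeddings $\vec\mu=\textsc{Long}_\mu(h,H,x^0,\vec\mu^0,\vec p,\vec V,\vec P)$. (4)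 Outputs $h_{\text{out}}=\textsc{Dense}([h,x])$ and $\vec v_{\text{out}}=U([\vec v,\vec\mu])$, where $[\cdot,\cdot]$ is channel concatenation, $\textsc{Dense}$ is a linear layer with bias followed by an activation acting on scalar features, and $U$ is a linear map without bias acting only on the channel dimension (so $U(R\vec w)=RU(\vec w)$). *)

theory Defs
  imports "HOL-Analysis.Analysis"
begin

text \<open>Atoms are indexed by a finite type 'a, fragments by a finite
type 'f, channels by a finite type 'd (so d = CARD('d)).\<close>

type_synonym 'd scal = "'d \<Rightarrow> real"
type_synonym 'd vect = "'d \<Rightarrow> real^3"

definition rot_pos :: "real^3^3 \<Rightarrow> ('i \<Rightarrow> real^3) \<Rightarrow> ('i \<Rightarrow> real^3)" where
  "rot_pos R p = (\<lambda>i. R *v p i)"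

definition rot_vect :: "real^3^3 \<Rightarrow> ('i \<Rightarrow> 'd vect) \<Rightarrow> ('i \<Rightarrow> 'd vect)" where
  "rot_vect R w = (\<lambda>i c. R *v w i c)"

definition dense :: "(real \<Rightarrow> real) \<Rightarrow> ('o \<Rightarrow> 'c::finite \<Rightarrow> real) \<Rightarrow> ('o \<Rightarrow> real)
                     \<Rightarrow> 'c scal \<Rightarrow> 'o scal" where
  "dense \<sigma> W b h = (\<lambda>k. \<sigma> ((\<Sum>c\<in>UNIV. W k c * h c) + b k))"

definition chan_lin :: "('o \<Rightarrow> 'c::finite \<Rightarrow> real) \<Rightarrow> 'c vect \<Rightarrow> 'o vect" where
  "chan_lin W w = (\<lambda>k. \<Sum>c\<in>UNIV. W k c *\<^sub>R w c)"

definition concat_ch :: "('c \<Rightarrow> 'x) \<Rightarrow> ('e \<Rightarrow> 'x) \<Rightarrow> ('c + 'e \<Rightarrow> 'x)" where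
  "concat_ch u w = (\<lambda>k. case k of Inl c \<Rightarrow> u c | Inr e \<Rightarrow> w e)"

definition lsr_h_out ::
  "(('a::finite \<Rightarrow> nat) \<Rightarrow> ('a \<Rightarrow> real^3) \<Rightarrow> 'a \<Rightarrow> 'd::finite scal)
   \<Rightarrow> (('a \<Rightarrow> nat) \<Rightarrow> ('a \<Rightarrow> real^3) \<Rightarrow> 'a \<Rightarrow> 'd vect)
   \<Rightarrow> (('a \<Rightarrow> 'd scal) \<Rightarrow> ('f::finite \<Rightarrow> 'd scal) \<Rightarrow> ('a \<Rightarrow> 'd scal) \<Rightarrow> ('a \<Rightarrow> 'd vect)
       \<Rightarrow> ('a \<Rightarrow> real^3) \<Rightarrow> ('f \<Rightarrow> 'd vect) \<Rightarrow> ('f \<Rightarrow> real^3) \<Rightarrow> ('a \<Rightarrow> 'd scal))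
   \<Rightarrow> ('f \<Rightarrow> 'a set) \<Rightarrow> ('a \<Rightarrow> 'd scal) \<Rightarrow> ('a \<Rightarrow> 'd \<Rightarrow> real) \<Rightarrow> ('a \<Rightarrow> real)
   \<Rightarrow> (real \<Rightarrow> real) \<Rightarrow> ('d \<Rightarrow> 'd \<Rightarrow> real) \<Rightarrow> ('d \<Rightarrow> real)
   \<Rightarrow> ('d \<Rightarrow> 'd \<Rightarrow> real)
   \<Rightarrow> (real \<Rightarrow> real) \<Rightarrow> ('d \<Rightarrow> 'd + 'd \<Rightarrow> real) \<Rightarrow> ('d \<Rightarrow> real)
   \<Rightarrow> ('a \<Rightarrow> nat) \<Rightarrow> ('a \<Rightarrow> real^3) \<Rightarrow> 'a \<Rightarrow> 'd scal" where
  "lsr_h_out Sh Sv Lx S \<alpha> \<beta> \<gamma> \<sigma>1 W1 b1 U0 \<sigma>2 W2 b2 Z p =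
    (let h = Sh Z p;
         v = Sv Z p;
         H = (\<lambda>j c. \<Sum>i\<in>S j. \<alpha> i c * h i c);
         V = (\<lambda>j c. \<Sum>i\<in>S j. \<beta> i c *\<^sub>R v i c);
         P = (\<lambda>j. \<Sum>i\<in>S j. \<gamma> i *\<^sub>R p i);
         x0 = (\<lambda>i. dense \<sigma>1 W1 b1 (h i));
         \<mu>0 = (\<lambda>i. chan_lin U0 (v i));
         x = Lx h H x0 \<mu>0 p V P
     in (\<lambda>i. dense \<sigma>2 W2 b2 (concat_ch (h i) (x i))))"

end

theory Submission
  imports Defs
begin

theorem proposition1:
  fixes Sh :: "('a::finite \<Rightarrow> nat) \<Rightarrow> ('a \<Rightarrow> real^3) \<Rightarrow> 'a \<Rightarrow> 'd::finite scal"
    and Sv :: "('a \<Rightarrow> nat) \<Rightarrow> ('a \<Rightarrow> real^3) \<Rightarrow> 'a \<Rightarrow> 'd vect"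
    and Lx :: "('a \<Rightarrow> 'd scal) \<Rightarrow> ('f::finite \<Rightarrow> 'd scal) \<Rightarrow> ('a \<Rightarrow> 'd scal) \<Rightarrow> ('a \<Rightarrow> 'd vect)
       \<Rightarrow> ('a \<Rightarrow> real^3) \<Rightarrow> ('f \<Rightarrow> 'd vect) \<Rightarrow> ('f \<Rightarrow> real^3) \<Rightarrow> ('a \<Rightarrow> 'd scal)"
    and S :: "'f \<Rightarrow> 'a set"
    and \<alpha> \<beta> :: "'a \<Rightarrow> 'd \<Rightarrow> real" and \<gamma> :: "'a \<Rightarrow> real"
    and \<sigma>1 \<sigma>2 :: "real \<Rightarrow> real"
    and W1 U0 :: "'d \<Rightarrow> 'd \<Rightarrow> real" and b1 b2 :: "'d \<Rightarrow> real"
    and W2 :: "'d \<Rightarrow> 'd + 'd \<Rightarrow> real"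
    and Z :: "'a \<Rightarrow> nat" and p :: "'a \<Rightarrow> real^3" and R :: "real^3^3"
  assumes short_h: "\<And>R Z p. rotation_matrix R \<Longrightarrow> Sh Z (rot_pos R p) = Sh Z p"
    and short_v: "\<And>R Z p. rotation_matrix R \<Longrightarrow> Sv Z (rot_pos R p) = rot_vect R (Sv Z p)"
    and long_x: "\<And>R h H x0 \<mu>0 q V P. rotation_matrix R \<Longrightarrow>
        Lx h H x0 (rot_vect R \<mu>0) (rot_pos R q) (rot_vect R V) (rot_pos R P)
        = Lx h H x0 \<mu>0 q V P"
    and rot: "rotation_matrix R"
  shows "lsr_h_out Sh Sv Lx S \<alpha> \<beta> \<gamma> \<sigma>1 W1 b1 U0 \<sigma>2 W2 b2 Z (rot_pos R p)
       = lsr_h_out Sh Sv Lx S \<alpha> \<beta> \<gamma> \<sigma>1 W1 b1 U0 \<sigma>2 W2 b2 Z p"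
proof -
  have lin: "linear (\<lambda>x::real^3. R *v x)" by (rule matrix_vector_mul_linear)
  have ms: "R *v (\<Sum>i\<in>A. f i) = (\<Sum>i\<in>A. R *v f i)" for A and f :: "'a \<Rightarrow> real^3"
    using linear_sum[OF lin] by simp
  have sc: "R *v (c *\<^sub>R x) = c *\<^sub>R (R *v x)" for c and x :: "real^3"
    using linear_scale[OF lin] by simp
  have ms2: "R *v (\<Sum>i\<in>A. f i) = (\<Sum>i\<in>A. R *v f i)" for A and f :: "'d \<Rightarrow> real^3"
    using linear_sum[OF lin] by simp
  let ?v = "Sv Z p"
  have V: "(\<lambda>j c. \<Sum>i\<in>S j. \<beta> i c *\<^sub>R rot_vect R ?v i c) = rot_vect R (\<lambda>j c. \<Sum>i\<in>S j. \<beta> i c *\<^sub>R ?v i c)"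
    by (simp add: rot_vect_def ms sc)
  have P: "(\<lambda>j. \<Sum>i\<in>S j. \<gamma> i *\<^sub>R rot_pos R p i) = rot_pos R (\<lambda>j. \<Sum>i\<in>S j. \<gamma> i *\<^sub>R p i)"
    by (simp add: rot_pos_def ms sc)
  have M: "(\<lambda>i. chan_lin U0 (rot_vect R ?v i)) = rot_vect R (\<lambda>i. chan_lin U0 (?v i))"
    by (simp add: rot_vect_def chan_lin_def ms2 sc)
  show ?thesis
    unfolding lsr_h_out_def Let_def short_h[OF rot] short_v[OF rot] V P M long_x[OF rot] ..
qed

end
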